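(* Let $q\ge3$ be an integer and $\beta>0$ with $2\pi^2-\beta\pi^2+\beta q^2\sin^2(\frac{\pi}{q})\ne0$. Put $$c_1=\frac{4\beta\pi\sin^2(\frac{\pi}{q})}{2\pi^2-\beta\pi^2+\beta q^2\sin^2(\frac{\pi}{q})},\qquad c_2=\frac{2\beta q\sin^2(\frac{\pi}{q})}{2\pi^2-\beta\pi^2+\beta q^2\sin^2(\frac{\pi}{q})},$$ and let $\tilde M$ be the $q\times q$ matrix with entries ($i,j\in\{1,\dots,q\}$, index differences mod $q$) $$\tilde M(i,j)=\frac{q}{2\pi}\Big(\delta_{j=i-1}-\delta_{j=i}+c_1\sin\big(\tfrac{2\pi}{q}(i-j)\big)+c_2\big[\cos\big(\tfrac{2\pi}{q}(i-j)\big)-\cos\big(\tfrac{2\pi}{q}(i-j-1)\big)\big]\Big).$$ Then the eigenvalues of $\tilde M$ are $\lambda_1=\frac{q}{2\pi}\Big(\big(c_2\tfrac q2-1\big)\big(1-\cos\tfrac{2\pi}{q}\big)+i\big[\big(c_2\tfrac q2-1\big)\sin\tfrac{2\pi}{q}-c_1\tfrac q2\big]\Big)$, $\lambda_{q-1}=\overline{\lambda_1}$, $\lambda_j=\frac{q}{2\pi}\Big(\big[\cos\tfrac{2\pi j}{q}-1\big]-i\sin\tfrac{2\pi j}{q}\Big)$ for $j\in\{2,\dots,q-2\}$, and $\lambda_q=0$. *)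

theory Defs
  imports Complex_Main "Jordan_Normal_Form.Char_Poly"
begin

definition denom :: "nat \<Rightarrow> real \<Rightarrow> real" where
  "denom q \<beta> = 2*pi^2 - \<beta>*pi^2 + \<beta>*(real q)^2*(sin (pi / real q))^2"

definition c1 :: "nat \<Rightarrow> real \<Rightarrow> real" where
  "c1 q \<beta> = 4*\<beta>*pi*(sin (pi / real q))^2 / denom q \<beta>"

definition c2 :: "nat \<Rightarrow> real \<Rightarrow> real" where
  "c2 q \<beta> = 2*\<beta>*real q*(sin (pi / real q))^2 / denom q \<beta>"

definition Mentry :: "nat \<Rightarrow> real \<Rightarrow> int \<Rightarrow> int \<Rightarrow> real" where
  "Mentry q \<beta> i j = real q / (2*pi) *
     ((if (i - j) mod int q = 1 then 1 else 0) - (if (i - j) mod int q = 0 then 1 else 0)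
      + c1 q \<beta> * sin (2*pi / real q * real_of_int (i - j))
      + c2 q \<beta> * (cos (2*pi / real q * real_of_int (i - j))
                   - cos (2*pi / real q * real_of_int (i - j - 1))))"

text \<open>The q x q matrix (0-based row/column k corresponds to paper index k+1).\<close>
definition Mtilde :: "nat \<Rightarrow> real \<Rightarrow> complex mat" where
  "Mtilde q \<beta> = mat q q (\<lambda>(i,j). complex_of_real (Mentry q \<beta> (int i + 1) (int j + 1)))"

definition lam :: "nat \<Rightarrow> real \<Rightarrow> nat \<Rightarrow> complex" where
  "lam q \<beta> j =
    (let l1 = complex_of_real (real q / (2*pi)) *
          Complex ((c2 q \<beta> * real q / 2 - 1) * (1 - cos (2*pi / real q)))
                  ((c2 q \<beta> * real q / 2 - 1) * sin (2*pi / real q) - c1 q \<beta> * real q / 2)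
     in if j = 1 then l1
        else if j = q - 1 then cnj l1
        else if j = q then 0
        else complex_of_real (real q / (2*pi)) *
          Complex (cos (2*pi*real j / real q) - 1) (- sin (2*pi*real j / real q)))"

end

theory Submission
  imports Defs
begin


definition ee :: "nat \<Rightarrow> int \<Rightarrow> complex" where
  "ee q n = cis (2*pi*real_of_int n / real q)"

lemma ee_add: "ee q (a+b) = ee q a * ee q b"
  unfolding ee_def cis_mult by (simp add: add_divide_distrib distrib_left)

lemma ee_0[simp]: "ee q 0 = 1" by (simp add: ee_def)

lemma ee_mult_q: assumes "q > 0" shows "ee q (int q * m) = 1"
proof -
  have "2*pi*real_of_int (int q * m) / real q = 2*pi*real_of_int m" using assms by simp
  thus ?thesis unfolding ee_def by simp
qed

lemma ee_mod: assumes "q > 0" shows "ee q (n mod int q) = ee q n"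
proof -
  have "n = int q * (n div int q) + n mod int q" by simp
  hence "ee q n = ee q (int q * (n div int q)) * ee q (n mod int q)" by (metis ee_add)
  thus ?thesis using ee_mult_q[OF assms] by simp
qed

lemma ee_pow: "ee q (int j * m) = ee q m ^ j"
  unfolding ee_def DeMoivre by (simp add: field_simps)

lemma ee_neq1: assumes "q > 0" "\<not> int q dvd m" shows "ee q m \<noteq> 1"
proof
  assume "ee q m = 1"
  hence "cos (2*pi*real_of_int m / real q) = 1" unfolding ee_def
    by (metis cis.simps(1) one_complex.sel(1))
  then obtain n :: int where n: "2*pi*real_of_int m / real q = real_of_int n*2*pi" using cos_one_2pi_int by blast
  hence "real_of_int m = real_of_int n * real q" using assms(1) by (simp add: field_simps)
  hence "m = n * int q" by (metis of_int_eq_iff of_int_mult of_int_of_nat_eq)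
  thus False using assms(2) by simp
qed

lemma geom: assumes "q > 0"
  shows "(\<Sum>j<q. ee q (int j * m)) = (if int q dvd m then of_nat q else 0)"
proof (cases "int q dvd m")
  case True
  then obtain t where "m = int q * t" by blast
  hence "ee q (int j * m) = 1" for j using ee_mult_q[OF assms, of "int j * t"]
    by (simp add: ac_simps)
  thus ?thesis using True by simp
next
  case False
  have "(\<Sum>j<q. ee q (int j * m)) = (\<Sum>j<q. ee q m ^ j)" by (simp add: ee_pow)
  also have "\<dots> = (ee q m ^ q - 1) / (ee q m - 1)" using ee_neq1[OF assms False] geometric_sum by blast
  also have "ee q m ^ q = 1" using ee_mult_q[OF assms, of m] ee_pow[of q q m] by simp
  finally show ?thesis using False by simp
qed

lemma cos_ee: "complex_of_real (cos (2*pi/real q * real_of_int n)) = (ee q n + ee q (-n)) / 2"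
  unfolding ee_def by (simp add: complex_eq_iff)

lemma sin_ee: "complex_of_real (sin (2*pi/real q * real_of_int n)) = (ee q n - ee q (-n)) / (2*\<i>)"
  unfolding ee_def by (simp add: complex_eq_iff)



definition G :: "nat \<Rightarrow> int \<Rightarrow> complex" where
  "G q m = (if int q dvd m then of_nat q else 0)"

lemma Lsum: assumes "q > 0" shows "(\<Sum>j<q. ee q (a + int j * b)) = ee q a * G q b"
  using geom[OF assms, of b] by (simp add: ee_add G_def flip: sum_distrib_left)

lemma delta_sum: assumes "q > 0"
  shows "(\<Sum>j<q. (if (a - int j) mod int q = r then 1 else 0) * ee q (int j * k))
       = (if 0 \<le> r \<and> r < int q then ee q ((a - r) * k) else 0)"
proof (cases "0 \<le> r \<and> r < int q")
  case True
  define j0 where "j0 = nat ((a - r) mod int q)"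
  have j0: "j0 < q" "int j0 = (a - r) mod int q" using assms unfolding j0_def by (auto simp: nat_less_iff)
  have iff: "(a - int j) mod int q = r \<longleftrightarrow> j = j0" if "j < q" for j
  proof -
    have "(a - int j) mod int q = r \<longleftrightarrow> (a - int j) mod int q = r mod int q" using True by simp
    also have "\<dots> \<longleftrightarrow> (a - r) mod int q = int j mod int q" unfolding mod_eq_dvd_iff by (simp add: algebra_simps)
    also have "int j mod int q = int j" using that by simp
    also have "(a - r) mod int q = int j \<longleftrightarrow> j = j0" using j0 by auto
    finally show ?thesis .
  qed
  have "(\<Sum>j<q. (if (a - int j) mod int q = r then 1 else 0) * ee q (int j * k))
      = (\<Sum>j<q. if j = j0 then ee q (int j0 * k) else 0)"
    by (rule sum.cong) (auto simp: iff)
  also have "\<dots> = ee q (int j0 * k)" using j0 by simp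
  also have "\<dots> = ee q ((a - r) * k)"
  proof -
    have "ee q (int j0 * k) = ee q ((int j0 * k) mod int q)" using ee_mod[OF assms] by simp
    also have "(int j0 * k) mod int q = ((a - r) * k) mod int q" unfolding j0(2) by (rule mod_mult_left_eq)
    finally show ?thesis using ee_mod[OF assms] by simp
  qed
  finally show ?thesis using True by simp
next
  case False
  have "(a - int j) mod int q \<noteq> r" for j
  proof -
    have "0 \<le> (a - int j) mod int q" "(a - int j) mod int q < int q" using assms by auto
    thus ?thesis using False by auto
  qed
  thus ?thesis using False by (simp del: de_Morgan_conj)
qed



lemma Mentry_c:
  "complex_of_real (Mentry q \<beta> (int i + 1) (int j + 1)) =
   complex_of_real (real q / (2*pi)) *
     ((if (int i - int j) mod int q = 1 then 1 else 0) - (if (int i - int j) mod int q = 0 then 1 else 0)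
      + complex_of_real (c1 q \<beta>) * ((ee q (int i - int j) - ee q (- (int i - int j))) / (2*\<i>))
      + complex_of_real (c2 q \<beta>) * ((ee q (int i - int j) + ee q (- (int i - int j))) / 2
                   - (ee q (int i - int j - 1) + ee q (- (int i - int j - 1))) / 2))"
proof -
  have e: "int i + 1 - (int j + 1) = int i - int j" by simp
  show ?thesis
    unfolding Mentry_def e of_real_mult of_real_add of_real_diff cos_ee sin_ee
    by simp
qed

lemma abs_id: "(K::complex) * (x - y + u1 * ((A - B) / (2*\<i>)) + u2 * ((A + B) / 2 - (C + D) / 2)) * E =
  K * (x * E - y * E + u1 / (2*\<i>) * (A * E - B * E) + u2 / 2 * (A * E + B * E - C * E - D * E))"
  by (simp add: field_simps)

lemma row_sum:
  assumes q1: "q > 1"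
  shows "(\<Sum>j<q. complex_of_real (Mentry q \<beta> (int i + 1) (int j + 1)) * ee q (int j * k)) =
   complex_of_real (real q / (2*pi)) *
     (ee q (int i * k) * (ee q (-k) - 1)
      + complex_of_real (c1 q \<beta>) / (2*\<i>) * (ee q (int i) * G q (k-1) - ee q (- int i) * G q (k+1))
      + complex_of_real (c2 q \<beta>) / 2 * (ee q (int i) * G q (k-1) + ee q (- int i) * G q (k+1)
          - ee q (int i - 1) * G q (k-1) - ee q (1 - int i) * G q (k+1)))"
proof -
  have assms: "q > 0" using q1 by simp
  let ?K = "complex_of_real (real q / (2*pi))"
  let ?C1 = "complex_of_real (c1 q \<beta>) / (2*\<i>)"
  let ?C2 = "complex_of_real (c2 q \<beta>) / 2"
  have h1: "ee q (int i - int j) * ee q (int j * k) = ee q (int i + int j * (k-1))" for j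
    by (subst ee_add[symmetric]) (simp add: algebra_simps)
  have h2: "ee q (- (int i - int j)) * ee q (int j * k) = ee q (- int i + int j * (k+1))" for j
    by (subst ee_add[symmetric]) (simp add: algebra_simps)
  have h3: "ee q (int i - int j - 1) * ee q (int j * k) = ee q ((int i - 1) + int j * (k-1))" for j
    by (subst ee_add[symmetric]) (simp add: algebra_simps)
  have h4: "ee q (- (int i - int j - 1)) * ee q (int j * k) = ee q ((1 - int i) + int j * (k+1))" for j
    by (subst ee_add[symmetric]) (simp add: algebra_simps)
  have tm: "complex_of_real (Mentry q \<beta> (int i + 1) (int j + 1)) * ee q (int j * k) =
     ?K * ((if (int i - int j) mod int q = 1 then 1 else 0) * ee q (int j * k)
         - (if (int i - int j) mod int q = 0 then 1 else 0) * ee q (int j * k)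
         + ?C1 * (ee q (int i + int j * (k-1)) - ee q (- int i + int j * (k+1)))
         + ?C2 * (ee q (int i + int j * (k-1)) + ee q (- int i + int j * (k+1))
                 - ee q ((int i - 1) + int j * (k-1)) - ee q ((1 - int i) + int j * (k+1))))" for j
    unfolding Mentry_c h1[symmetric] h2[symmetric] h3[symmetric] h4[symmetric]
    by (rule abs_id)
  have d1: "(\<Sum>j<q. (if (int i - int j) mod int q = 1 then 1 else 0) * ee q (int j * k)) = ee q ((int i - 1) * k)"
    using delta_sum[OF assms, of "int i" 1 k] q1 by simp
  have d0: "(\<Sum>j<q. (if (int i - int j) mod int q = 0 then 1 else 0) * ee q (int j * k)) = ee q (int i * k)"
    using delta_sum[OF assms, of "int i" 0 k] assms by simp
  have e1: "ee q ((int i - 1) * k) = ee q (int i * k) * ee q (-k)"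
    by (subst ee_add[symmetric]) (simp add: algebra_simps)
  have "(\<Sum>j<q. complex_of_real (Mentry q \<beta> (int i + 1) (int j + 1)) * ee q (int j * k)) =
    ?K * ((\<Sum>j<q. (if (int i - int j) mod int q = 1 then 1 else 0) * ee q (int j * k))
         - (\<Sum>j<q. (if (int i - int j) mod int q = 0 then 1 else 0) * ee q (int j * k))
         + ?C1 * ((\<Sum>j<q. ee q (int i + int j * (k-1))) - (\<Sum>j<q. ee q (- int i + int j * (k+1))))
         + ?C2 * ((\<Sum>j<q. ee q (int i + int j * (k-1))) + (\<Sum>j<q. ee q (- int i + int j * (k+1)))
                 - (\<Sum>j<q. ee q ((int i - 1) + int j * (k-1))) - (\<Sum>j<q. ee q ((1 - int i) + int j * (k+1)))))"
    unfolding tm by (simp only: sum.distrib sum_subtractf flip: sum_distrib_left)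
  also have "\<dots> = ?K * (ee q (int i * k) * ee q (-k) - ee q (int i * k)
         + ?C1 * (ee q (int i) * G q (k-1) - ee q (- int i) * G q (k+1))
         + ?C2 * (ee q (int i) * G q (k-1) + ee q (- int i) * G q (k+1)
                 - ee q (int i - 1) * G q (k-1) - ee q (1 - int i) * G q (k+1)))"
    unfolding Lsum[OF assms] d1 d0 e1 by (rule refl)
  finally show ?thesis by (simp add: algebra_simps)
qed



lemma G_zero: "0 < m \<Longrightarrow> m < int q \<Longrightarrow> G q m = 0"
  unfolding G_def using zdvd_imp_le by fastforce

lemma G_0[simp]: "G q 0 = of_nat q" by (simp add: G_def)
lemma G_q[simp]: "G q (int q) = of_nat q" by (simp add: G_def)

lemma ee_neg_Complex: "ee q (- n) = Complex (cos (2*pi*real_of_int n/real q)) (- sin (2*pi*real_of_int n/real q))"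
  unfolding ee_def by (simp add: complex_eq_iff)

lemma ee_Complex: "ee q n = Complex (cos (2*pi*real_of_int n/real q)) (sin (2*pi*real_of_int n/real q))"
  unfolding ee_def by (simp add: complex_eq_iff)

lemma div2i: "(x::complex) / (2*\<i>) = - (\<i> * x) / 2"
  by (simp add: field_simps)

lemma eigen:
  assumes q3: "q \<ge> 3" and t: "t < q" and k: "k = int t + 1"
  shows "complex_of_real (real q / (2*pi)) *
     (ee q (int i * k) * (ee q (-k) - 1)
      + complex_of_real (c1 q \<beta>) / (2*\<i>) * (ee q (int i) * G q (k-1) - ee q (- int i) * G q (k+1))
      + complex_of_real (c2 q \<beta>) / 2 * (ee q (int i) * G q (k-1) + ee q (- int i) * G q (k+1)
          - ee q (int i - 1) * G q (k-1) - ee q (1 - int i) * G q (k+1)))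
    = ee q (int i * k) * lam q \<beta> (t+1)"
proof -
  have q0: "q > 0" using q3 by simp
  let ?K = "complex_of_real (real q / (2*pi))"
  let ?C1 = "complex_of_real (c1 q \<beta>)"
  let ?C2 = "complex_of_real (c2 q \<beta>)"
  let ?a = "2*pi/real q"
  consider "t = 0" | "t = q - 2" | "t = q - 1" | "0 < t \<and> t < q - 2" using t by linarith
  then show ?thesis
  proof cases
    case 1
    have k1: "k = 1" using k 1 by simp
    have G2: "G q 2 = 0" using q3 by (intro G_zero) auto
    have ei: "ee q (int i - 1) = ee q (int i) * ee q (-1)"
      by (subst ee_add[symmetric]) simp
    have lam1: "lam q \<beta> (t+1) = ?K * Complex ((c2 q \<beta> * real q / 2 - 1) * (1 - cos ?a))
                  ((c2 q \<beta> * real q / 2 - 1) * sin ?a - c1 q \<beta> * real q / 2)"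
      unfolding lam_def Let_def using 1 by simp
    have em1: "ee q (-1) = Complex (cos ?a) (- sin ?a)" using ee_neg_Complex[of q 1] by simp
    have fac: "Complex ((c2 q \<beta> * real q / 2 - 1) * (1 - cos ?a))
                  ((c2 q \<beta> * real q / 2 - 1) * sin ?a - c1 q \<beta> * real q / 2)
       = (ee q (-1) - 1) + ?C1 / (2*\<i>) * of_nat q + ?C2 / 2 * (of_nat q - ee q (-1) * of_nat q)"
      unfolding div2i em1 by (simp add: complex_eq_iff algebra_simps)
    show ?thesis unfolding lam1 fac k1 using G2 ei
      by (simp add: algebra_simps)
  next
    case 2
    hence kk: "k = int q - 1" using k q3 by simp
    have Gk: "G q (k - 1) = 0" using q3 kk by (intro G_zero) auto
    have Gk1: "G q (k + 1) = of_nat q" using kk by simp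
    have e1: "ee q (int i * k) = ee q (- int i)"
    proof -
      have "ee q (int i * k) = ee q (- int i) * ee q (int q * int i)"
        by (subst ee_add[symmetric]) (simp add: kk algebra_simps)
      thus ?thesis using ee_mult_q[OF q0] by simp
    qed
    have e2: "ee q (-k) = ee q 1"
    proof -
      have "ee q (-k) = ee q 1 * ee q (int q * (-1))"
        by (subst ee_add[symmetric]) (simp add: kk algebra_simps)
      thus ?thesis using ee_mult_q[OF q0, of "-1"] by (simp only: mult_1_right)
    qed
    have e3: "ee q (1 - int i) = ee q (- int i) * ee q 1"
      by (subst ee_add[symmetric]) simp
    have lamq: "lam q \<beta> (t+1) = cnj (?K * Complex ((c2 q \<beta> * real q / 2 - 1) * (1 - cos ?a))
                  ((c2 q \<beta> * real q / 2 - 1) * sin ?a - c1 q \<beta> * real q / 2))"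
    proof -
      have tt: "t + 1 = q - 1" using 2 q3 by simp
      show ?thesis unfolding lam_def Let_def tt using q3 by (subgoal_tac "q - 1 \<noteq> 1") auto
    qed
    have ep1: "ee q 1 = Complex (cos ?a) (sin ?a)" using ee_Complex[of q 1] by simp
    have fac2: "cnj (?K * Complex ((c2 q \<beta> * real q / 2 - 1) * (1 - cos ?a))
                  ((c2 q \<beta> * real q / 2 - 1) * sin ?a - c1 q \<beta> * real q / 2))
       = ?K * ((ee q 1 - 1) - ?C1 / (2*\<i>) * of_nat q + ?C2 / 2 * (of_nat q - ee q 1 * of_nat q))"
      unfolding div2i ep1 by (simp add: complex_eq_iff field_simps)
    show ?thesis unfolding lamq fac2 Gk Gk1 e1 e2 e3
      by (simp add: algebra_simps)
  next
    case 3
    hence kk: "k = int q" using k q3 by simp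
    have Gk: "G q (k - 1) = 0" using q3 kk by (intro G_zero) auto
    have Gk1: "G q (k + 1) = 0" using q3 kk unfolding G_def
      by (auto dest: zdvd_imp_le)
    have e2: "ee q (-k) = 1" using ee_mult_q[OF q0, of "-1"] kk by simp
    have lamq: "lam q \<beta> (t+1) = 0" unfolding lam_def Let_def using 3 q3 by simp
    show ?thesis unfolding lamq Gk Gk1 e2 by simp
  next
    case 4
    have Gk: "G q (k - 1) = 0" using 4 k q3 by (intro G_zero) auto
    have Gk1: "G q (k + 1) = 0" using 4 k q3 by (intro G_zero) auto
    have lamq: "lam q \<beta> (t+1) = ?K * Complex (cos (2*pi*real (t+1) / real q) - 1) (- sin (2*pi*real (t+1) / real q))"
      unfolding lam_def Let_def using 4 q3 by (subgoal_tac "Suc t \<noteq> q \<and> Suc t \<noteq> q - 1") auto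
    have e2: "ee q (-k) = Complex (cos (2*pi*real (t+1) / real q)) (- sin (2*pi*real (t+1) / real q))"
      using ee_neg_Complex[of q k] k by (simp add: add.commute)
    show ?thesis unfolding lamq Gk Gk1 e2
      by (simp add: complex_eq_iff field_simps)
  qed
qed



definition VV :: "nat \<Rightarrow> complex mat" where
  "VV q = mat q q (\<lambda>(i,j). ee q (int i * (int j + 1)))"
definition WW :: "nat \<Rightarrow> complex mat" where
  "WW q = mat q q (\<lambda>(i,j). ee q (- (int i + 1) * int j) / of_nat q)"
definition DD :: "nat \<Rightarrow> real \<Rightarrow> complex mat" where
  "DD q \<beta> = mat q q (\<lambda>(i,j). if i = j then lam q \<beta> (j+1) else 0)"

lemma G_diff: assumes "i < q" "l < q" shows "G q (int i - int l) = (if i = l then of_nat q else 0)"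
proof -
  have "int q dvd (int i - int l) \<longleftrightarrow> i = l"
  proof
    assume d: "int q dvd (int i - int l)"
    have "\<bar>int i - int l\<bar> < int q" using assms by auto
    from d obtain m where m: "int i - int l = int q * m" by blast
    show "i = l"
    proof (cases "m = 0")
      case True thus ?thesis using m by simp
    next
      case False
      hence "1 \<le> \<bar>m\<bar>" by simp
      hence "int q * 1 \<le> int q * \<bar>m\<bar>" by (intro mult_left_mono) auto
      also have "int q * \<bar>m\<bar> = \<bar>int i - int l\<bar>" unfolding m by (simp add: abs_mult)
      finally show ?thesis using \<open>\<bar>int i - int l\<bar> < int q\<close> by simp
    qed
  qed simp
  thus ?thesis unfolding G_def by simp
qed

lemma VW: assumes "q > 0" shows "VV q * WW q = 1\<^sub>m q"
proof (rule eq_matI)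
  fix i l assume il: "i < dim_row (1\<^sub>m q)" "l < dim_col (1\<^sub>m q)"
  hence il': "i < q" "l < q" by auto
  have "(VV q * WW q) $$ (i, l) = (\<Sum>j<q. ee q (int i * (int j + 1)) * (ee q (- (int j + 1) * int l) / of_nat q))"
    using il' unfolding VV_def WW_def by (simp add: scalar_prod_def lessThan_atLeast0)
  also have "\<dots> = (\<Sum>j<q. ee q ((int i - int l) + int j * (int i - int l))) / of_nat q"
    unfolding sum_divide_distrib
  proof (rule sum.cong[OF refl])
    fix j
    have "ee q (int i * (int j + 1)) * ee q (- (int j + 1) * int l) = ee q ((int i - int l) + int j * (int i - int l))"
      by (subst ee_add[symmetric]) (simp add: algebra_simps)
    thus "ee q (int i * (int j + 1)) * (ee q (- (int j + 1) * int l) / of_nat q) = ee q ((int i - int l) + int j * (int i - int l)) / of_nat q"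
      by simp
  qed
  also have "\<dots> = ee q (int i - int l) * G q (int i - int l) / of_nat q" using Lsum[OF assms] by simp
  also have "\<dots> = 1\<^sub>m q $$ (i, l)" using il' G_diff[OF il'] assms by simp
  finally show "(VV q * WW q) $$ (i, l) = 1\<^sub>m q $$ (i, l)" .
qed (auto simp: VV_def WW_def)

lemma WV: assumes "q > 0" shows "WW q * VV q = 1\<^sub>m q"
proof (rule eq_matI)
  fix i l assume il: "i < dim_row (1\<^sub>m q)" "l < dim_col (1\<^sub>m q)"
  hence il': "i < q" "l < q" by auto
  have "(WW q * VV q) $$ (i, l) = (\<Sum>j<q. (ee q (- (int i + 1) * int j) / of_nat q) * ee q (int j * (int l + 1)))"
    using il' unfolding VV_def WW_def by (simp add: scalar_prod_def lessThan_atLeast0)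
  also have "\<dots> = (\<Sum>j<q. ee q (0 + int j * (int l - int i))) / of_nat q"
    unfolding sum_divide_distrib
  proof (rule sum.cong[OF refl])
    fix j
    have "ee q (- (int i + 1) * int j) * ee q (int j * (int l + 1)) = ee q (0 + int j * (int l - int i))"
      by (subst ee_add[symmetric]) (simp add: algebra_simps)
    thus "ee q (- (int i + 1) * int j) / of_nat q * ee q (int j * (int l + 1)) = ee q (0 + int j * (int l - int i)) / of_nat q"
      by simp
  qed
  also have "\<dots> = G q (int l - int i) / of_nat q" using Lsum[OF assms, of 0] by simp
  also have "\<dots> = 1\<^sub>m q $$ (i, l)" using il' G_diff[OF il'(2,1)] assms by auto
  finally show "(WW q * VV q) $$ (i, l) = 1\<^sub>m q $$ (i, l)" .
qed (auto simp: VV_def WW_def)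

lemma MV: assumes "q \<ge> 3" shows "Mtilde q \<beta> * VV q = VV q * DD q \<beta>"
proof (rule eq_matI)
  fix i l assume il: "i < dim_row (VV q * DD q \<beta>)" "l < dim_col (VV q * DD q \<beta>)"
  hence il': "i < q" "l < q" by (auto simp: VV_def DD_def)
  have "(Mtilde q \<beta> * VV q) $$ (i, l) = (\<Sum>j<q. complex_of_real (Mentry q \<beta> (int i + 1) (int j + 1)) * ee q (int j * (int l + 1)))"
    using il' unfolding VV_def Mtilde_def by (simp add: scalar_prod_def lessThan_atLeast0)
  also have "\<dots> = ee q (int i * (int l + 1)) * lam q \<beta> (l+1)"
  proof -
    have q1: "q > 1" using assms by simp
    show ?thesis unfolding row_sum[OF q1] by (rule eigen[OF assms il'(2) refl])
  qed
  also have "\<dots> = (VV q * DD q \<beta>) $$ (i, l)"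
  proof -
    have "(VV q * DD q \<beta>) $$ (i, l) = (\<Sum>j\<in>{0..<q}. ee q (int i * (int j + 1)) * (if j = l then lam q \<beta> (l+1) else 0))"
      using il' unfolding VV_def DD_def by (simp add: scalar_prod_def)
    also have "\<dots> = ee q (int i * (int l + 1)) * lam q \<beta> (l+1)"
      using il' by (simp add: if_distrib cong: if_cong)
    finally show ?thesis by simp
  qed
  finally show "(Mtilde q \<beta> * VV q) $$ (i, l) = (VV q * DD q \<beta>) $$ (i, l)" .
qed (auto simp: VV_def DD_def Mtilde_def)

theorem lemma3p2:
  fixes q :: nat and \<beta> :: real
  assumes "q \<ge> 3" and "\<beta> > 0"
    and "2*pi^2 - \<beta>*pi^2 + \<beta>*(real q)^2*(sin (pi / real q))^2 \<noteq> 0"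
  shows "char_poly (Mtilde q \<beta>) = (\<Prod>j = 1..q. [:- lam q \<beta> j, 1:])"
proof -
  have q0: "q > 0" using assms(1) by simp
  have carr: "Mtilde q \<beta> \<in> carrier_mat q q" "DD q \<beta> \<in> carrier_mat q q" "VV q \<in> carrier_mat q q"
    "WW q \<in> carrier_mat q q" by (auto simp: Mtilde_def DD_def VV_def WW_def)
  have "Mtilde q \<beta> = Mtilde q \<beta> * (VV q * WW q)" using carr VW[OF q0] by simp
  also have "\<dots> = (Mtilde q \<beta> * VV q) * WW q" by (rule assoc_mult_mat[OF carr(1,3,4), symmetric])
  also have "\<dots> = VV q * DD q \<beta> * WW q" unfolding MV[OF assms(1)] ..
  finally have eq: "Mtilde q \<beta> = VV q * DD q \<beta> * WW q" .
  have "similar_mat_wit (Mtilde q \<beta>) (DD q \<beta>) (VV q) (WW q)"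
    unfolding similar_mat_wit_def Let_def using carr VW[OF q0] WV[OF q0] eq by auto
  hence "similar_mat (Mtilde q \<beta>) (DD q \<beta>)" unfolding similar_mat_def by blast
  hence "char_poly (Mtilde q \<beta>) = char_poly (DD q \<beta>)" by (rule char_poly_similar)
  also have "\<dots> = (\<Prod>a\<leftarrow>diag_mat (DD q \<beta>). [:- a, 1:])"
    by (rule char_poly_upper_triangular[OF carr(2)]) (auto simp: upper_triangular_def DD_def)
  also have "diag_mat (DD q \<beta>) = map (\<lambda>i. lam q \<beta> (i+1)) [0..<q]"
    by (auto simp: diag_mat_def DD_def intro!: map_cong)
  also have "(\<Prod>a\<leftarrow>map (\<lambda>i. lam q \<beta> (i+1)) [0..<q]. [:- a, 1:]) = (\<Prod>i<q. [:- lam q \<beta> (i+1), 1:])"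
    by (simp add: prod.distinct_set_conv_list[symmetric] atLeast0LessThan o_def)
  also have "\<dots> = (\<Prod>j = 1..q. [:- lam q \<beta> j, 1:])"
    by (simp add: prod.atLeast1_atMost_eq)
  finally show ?thesis .
qed

end
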